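(* For every $m\in\mathbb{N}$ and $\boldsymbol{X}\in\mathbb{N}^m$, writing $n_x:=m\widehat{\boldsymbol{\mu}}_m(x)$ for the number of occurrences of $x$ in $\boldsymbol{X}$, $$\hat{\mathfrak{R}}_m(\boldsymbol{X})=\frac1m\sum_{x:\,n_x>0}\frac{1}{2^{n_x}}\left\lceil\frac{n_x}{2}\right\rceil\binom{n_x}{\lceil n_x/2\rceil}.$$
   Context: $\widehat{\boldsymbol{\mu}}_m(i)=\frac1m\sum_{t=1}^m\mathbb{I}\{X_t=i\}$. $\hat{\mathfrak{R}}_m(\boldsymbol{X})=\mathbb{E}_{\boldsymbol{\sigma}}\big[\sup_{f:\mathbb{N}\to\{0,1\}}\frac1m\sum_{t=1}^m\sigma_tf(X_t)\big]$ with $\boldsymbol{\sigma}$ uniform on $\{-1,1\}^m$. *)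

theory Defs
  imports Complex_Main "HOL-Library.FuncSet"
begin

text \<open>A sample X \<in> \<nat>^m is a list of naturals of length m; positions are 0..<m.\<close>

definition emp_measure :: "nat list \<Rightarrow> nat \<Rightarrow> real" where
  "emp_measure X i = (1 / real (length X)) * (\<Sum>t<length X. if X ! t = i then 1 else 0)"

definition emp_rademacher :: "nat list \<Rightarrow> real" where
  "emp_rademacher X =
     (let m = length X;
          Sigmas = ({..<m} \<rightarrow>\<^sub>E ({-1, 1} :: real set))
      in (1 / real (card Sigmas)) *
         (\<Sum>\<sigma>\<in>Sigmas.
            Sup {(1 / real m) * (\<Sum>t<m. \<sigma> t * f (X ! t)) | f :: nat \<Rightarrow> real.
                   \<forall>x. f x \<in> {0, 1}}))"

end

theory Submission imports Defs begin
lemma pascal_sum: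
  fixes H :: "nat \<Rightarrow> real"
  shows "(\<Sum>k\<le>Suc n. real (Suc n choose k) * H k) =
    (\<Sum>k\<le>n. real (n choose k) * H k) + (\<Sum>k\<le>n. real (n choose k) * H (Suc k))"
proof -
  have "(\<Sum>k\<le>Suc n. real (Suc n choose k) * H k) =
     H 0 + (\<Sum>k\<le>n. real (Suc n choose Suc k) * H (Suc k))"
    by (subst sum.atMost_Suc_shift) simp
  also have "\<dots> = H 0 + (\<Sum>k\<le>n. real (n choose Suc k) * H (Suc k)) + (\<Sum>k\<le>n. real (n choose k) * H (Suc k))"
    by (simp add: sum.distrib algebra_simps)
  also have "H 0 + (\<Sum>k\<le>n. real (n choose Suc k) * H (Suc k)) = (\<Sum>k\<le>Suc n. real (n choose k) * H k)"
    by (subst sum.atMost_Suc_shift) simp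
  also have "\<dots> = (\<Sum>k\<le>n. real (n choose k) * H k)"
    by simp
  finally show ?thesis .
qed

lemma L1:
  assumes "finite A"
  shows "(\<Sum>\<sigma>\<in>A \<rightarrow>\<^sub>E {-1,1::real}. F (\<Sum>t\<in>A\<inter>T. \<sigma> t)) =
     2 ^ card (A - T) * (\<Sum>k\<le>card (A\<inter>T). real (card (A\<inter>T) choose k) * F (2 * real k - real (card (A\<inter>T))))"
  using assms
proof (induction A arbitrary: F rule: finite_induct)
  case empty
  then show ?case by simp
next
  case (insert a A)
  let ?B = "{-1,1::real}"
  have "(\<Sum>\<sigma>\<in>insert a A \<rightarrow>\<^sub>E ?B. F (\<Sum>t\<in>insert a A\<inter>T. \<sigma> t)) =
     (\<Sum>p\<in>?B \<times> (A \<rightarrow>\<^sub>E ?B). F (\<Sum>t\<in>insert a A\<inter>T. ((\<lambda>(y, g). g(a := y)) p) t))"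
    unfolding PiE_insert_eq
    by (subst sum.reindex) (use inj_combinator[OF insert(2)] in auto)
  also have "\<dots> = (\<Sum>y\<in>?B. \<Sum>g\<in>A \<rightarrow>\<^sub>E ?B. F (\<Sum>t\<in>insert a A\<inter>T. (g(a := y)) t))"
    by (subst sum.cartesian_product) (simp add: case_prod_unfold)
  finally have eq: "(\<Sum>\<sigma>\<in>insert a A \<rightarrow>\<^sub>E ?B. F (\<Sum>t\<in>insert a A\<inter>T. \<sigma> t)) =
      (\<Sum>y\<in>?B. \<Sum>g\<in>A \<rightarrow>\<^sub>E ?B. F (\<Sum>t\<in>insert a A\<inter>T. (g(a := y)) t))" .
  have fa: "finite (A \<inter> T)" using insert by simp
  have upd: "(\<Sum>t\<in>A\<inter>T. (g(a := y)) t) = (\<Sum>t\<in>A\<inter>T. g t)" for g and y :: real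
    by (rule sum.cong) (use insert(2) in auto)
  show ?case
  proof (cases "a \<in> T")
    case True
    have i1: "insert a A \<inter> T = insert a (A \<inter> T)" using True by auto
    have i2: "insert a A - T = A - T" using True by auto
    have c: "card (insert a A \<inter> T) = Suc (card (A \<inter> T))"
      using i1 fa insert(2) by simp
    have s: "(\<Sum>t\<in>insert a A\<inter>T. (g(a := y)) t) = y + (\<Sum>t\<in>A\<inter>T. g t)" for g and y :: real
      unfolding i1 using fa insert(2) upd by simp
    define n where "n = card (A \<inter> T)"
    have "(\<Sum>\<sigma>\<in>insert a A \<rightarrow>\<^sub>E ?B. F (\<Sum>t\<in>insert a A\<inter>T. \<sigma> t)) =
       (\<Sum>g\<in>A \<rightarrow>\<^sub>E ?B. F (-1 + (\<Sum>t\<in>A\<inter>T. g t))) + (\<Sum>g\<in>A \<rightarrow>\<^sub>E ?B. F (1 + (\<Sum>t\<in>A\<inter>T. g t)))"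
      unfolding eq s by simp
    also have "\<dots> = 2 ^ card (A - T) * ((\<Sum>k\<le>n. real (n choose k) * F (-1 + (2 * real k - real n)))
          + (\<Sum>k\<le>n. real (n choose k) * F (1 + (2 * real k - real n))))"
      using insert(3)[of "\<lambda>s. F (-1 + s)"] insert(3)[of "\<lambda>s. F (1 + s)"]
      by (simp add: n_def algebra_simps)
    also have "(\<Sum>k\<le>n. real (n choose k) * F (-1 + (2 * real k - real n)))
          + (\<Sum>k\<le>n. real (n choose k) * F (1 + (2 * real k - real n)))
        = (\<Sum>k\<le>Suc n. real (Suc n choose k) * F (2 * real k - real (Suc n)))"
      by (subst pascal_sum) (simp add: algebra_simps)
    finally show ?thesis using c i2 by (simp add: n_def)
  next
    case False
    have i1: "insert a A \<inter> T = A \<inter> T" using False by auto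
    have i2: "insert a A - T = insert a (A - T)" using False by auto
    have c: "card (insert a A - T) = Suc (card (A - T))"
      using i2 insert by simp
    have "(\<Sum>\<sigma>\<in>insert a A \<rightarrow>\<^sub>E ?B. F (\<Sum>t\<in>insert a A\<inter>T. \<sigma> t)) =
       2 * (\<Sum>g\<in>A \<rightarrow>\<^sub>E ?B. F (\<Sum>t\<in>A\<inter>T. g t))"
      unfolding eq unfolding i1 upd by simp
    then show ?thesis unfolding i1 c using insert(3)[of F] by simp
  qed
qed

lemma L2a:
  assumes n: "n = Suc p"
  shows "(\<Sum>k\<le>n. real (n choose k) * max 0 (2 * real k - real n)) = real n * real (p choose (n div 2))"
proof -
  define q where "q = n div 2"
  define g where "g k = real (n choose k) * max 0 (2 * real k - real n)" for k
  have split: "{..n} = {..q} \<union> {Suc q..n}" by (auto simp: q_def)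
  have "(\<Sum>k\<le>n. g k) = (\<Sum>k\<le>q. g k) + (\<Sum>k=Suc q..n. g k)"
    unfolding split by (subst sum.union_disjoint) auto
  also have "(\<Sum>k\<le>q. g k) = 0"
    by (rule sum.neutral) (auto simp: g_def q_def)
  also have "(\<Sum>k=Suc q..n. g k) = (\<Sum>i=q..p. g (Suc i))"
    unfolding n by (rule sum.shift_bounds_cl_Suc_ivl)
  also have "\<dots> = (\<Sum>i=q..p. (- real n * real (p choose Suc i)) - (- real n * real (p choose i)))"
  proof (rule sum.cong)
    fix i assume i: "i \<in> {q..p}"
    have gt: "2 * real (Suc i) - real n \<ge> 0" using i n by (auto simp: q_def)
    have e1: "real (Suc p) * real (p choose i) = real (Suc p choose Suc i) * real (Suc i)"
      using Suc_times_binomial_eq[of p i] by (metis of_nat_mult)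
    have e2: "real (Suc p - Suc i) * real (Suc p choose Suc i) = real (Suc p) * real (p choose Suc i)"
      using binomial_absorb_comp[of "Suc p" "Suc i"] by (metis diff_Suc_1 of_nat_mult)
    have le: "Suc i \<le> Suc p" using i by auto
    have e3: "real (Suc p - Suc i) = real p - real i" using le by (simp add: of_nat_diff)
    show "g (Suc i) = (- real n * real (p choose Suc i)) - (- real n * real (p choose i))"
      unfolding g_def using gt e1 e2 e3 n by (simp add: algebra_simps)
  qed simp
  also have "\<dots> = (- real n * real (p choose Suc p)) - (- real n * real (p choose q))"
    by (rule sum_Suc_diff[where f = "\<lambda>i. - real n * real (p choose i)"]) (auto simp: q_def n)
  also have "\<dots> = real n * real (p choose q)" by simp
  finally show ?thesis by (simp add: g_def q_def)
qed

lemma L2b: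
  assumes n: "n = Suc p"
  shows "n * (p choose (n div 2)) = ((n + 1) div 2) * (n choose ((n + 1) div 2))"
proof (cases "even p")
  case True
  then obtain q where p: "p = 2 * q" by auto
  have "n div 2 = q" "(n+1) div 2 = Suc q" using n p by auto
  then show ?thesis using Suc_times_binomial_eq[of p q] n by simp
next
  case False
  then obtain q where p: "p = 2 * q + 1" using oddE by blast
  have a: "n div 2 = Suc q" "(n+1) div 2 = Suc q" using n p by auto
  have "(n - Suc q) * (n choose Suc q) = n * ((n - 1) choose Suc q)"
    by (rule binomial_absorb_comp)
  moreover have "n - Suc q = Suc q" using n p by simp
  ultimately show ?thesis using a n by simp
qed

lemma ceil_half: "nat \<lceil>real n / 2\<rceil> = (n + 1) div 2"
proof (cases "even n")
  case True
  then obtain q where "n = 2 * q" by auto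
  then show ?thesis by simp
next
  case False
  then obtain q where q: "n = 2 * q + 1" using oddE by blast
  have "\<lceil>real n / 2\<rceil> = int q + 1"
    by (rule ceiling_unique) (auto simp: q)
  then show ?thesis using q by simp
qed

lemma L2:
  assumes "n > 0"
  shows "(\<Sum>k\<le>n. real (n choose k) * max 0 (2 * real k - real n)) =
     real (nat \<lceil>real n / 2\<rceil>) * real (n choose nat \<lceil>real n / 2\<rceil>)"
proof -
  obtain p where n: "n = Suc p" using assms gr0_implies_Suc by blast
  show ?thesis unfolding L2a[OF n] ceil_half
    using arg_cong[OF L2b[OF n], of real] by (simp only: of_nat_mult)
qed

lemma group_sum:
  fixes h :: "nat \<Rightarrow> real"
  assumes "length X = m"
  shows "(\<Sum>t<m. h t) = (\<Sum>x\<in>set X. \<Sum>t\<in>{..<m} \<inter> {t. X ! t = x}. h t)"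
proof -
  have img: "(!) X ` {..<m} = set X" using assms by (auto simp: set_conv_nth)
  have "(\<Sum>t<m. h t) = (\<Sum>x\<in>(!) X ` {..<m}. \<Sum>t\<in>{t. t \<in> {..<m} \<and> X ! t = x}. h t)"
    by (rule sum.image_gen) simp
  also have "\<dots> = (\<Sum>x\<in>set X. \<Sum>t\<in>{..<m} \<inter> {t. X ! t = x}. h t)"
    unfolding img by (intro sum.cong) auto
  finally show ?thesis .
qed

lemma sup_step:
  fixes \<sigma> :: "nat \<Rightarrow> real"
  assumes "length X = m"
  shows "Sup {(1 / real m) * (\<Sum>t<m. \<sigma> t * f (X ! t)) | f :: nat \<Rightarrow> real. \<forall>x. f x \<in> {0, 1}}
     = (1 / real m) * (\<Sum>x\<in>set X. max 0 (\<Sum>t\<in>{..<m} \<inter> {t. X ! t = x}. \<sigma> t))"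
proof -
  let ?S = "\<lambda>x. (\<Sum>t\<in>{..<m} \<inter> {t. X ! t = x}. \<sigma> t)"
  have key: "(\<Sum>t<m. \<sigma> t * f (X ! t)) = (\<Sum>x\<in>set X. f x * ?S x)" for f :: "nat \<Rightarrow> real"
  proof -
    have "(\<Sum>t<m. \<sigma> t * f (X ! t)) = (\<Sum>x\<in>set X. \<Sum>t\<in>{..<m} \<inter> {t. X ! t = x}. \<sigma> t * f (X ! t))"
      by (rule group_sum[OF assms])
    also have "\<dots> = (\<Sum>x\<in>set X. \<Sum>t\<in>{..<m} \<inter> {t. X ! t = x}. f x * \<sigma> t)"
      by (intro sum.cong) auto
    also have "\<dots> = (\<Sum>x\<in>set X. f x * ?S x)"
      by (simp add: sum_distrib_left)
    finally show ?thesis .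
  qed
  define f0 where "f0 x = (if ?S x > 0 then 1 else (0::real))" for x
  show ?thesis
  proof (rule cSup_eq_maximum)
    have "(1 / real m) * (\<Sum>x\<in>set X. max 0 (?S x)) = (1 / real m) * (\<Sum>t<m. \<sigma> t * f0 (X ! t))"
      unfolding key by (intro arg_cong[where f = "\<lambda>s. (1 / real m) * s"] sum.cong) (auto simp: f0_def)
    moreover have "\<forall>x. f0 x \<in> {0, 1}" by (simp add: f0_def)
    ultimately show "(1 / real m) * (\<Sum>x\<in>set X. max 0 (?S x)) \<in>
      {(1 / real m) * (\<Sum>t<m. \<sigma> t * f (X ! t)) | f :: nat \<Rightarrow> real. \<forall>x. f x \<in> {0, 1}}"
      by blast
  next
    fix y assume "y \<in> {(1 / real m) * (\<Sum>t<m. \<sigma> t * f (X ! t)) | f :: nat \<Rightarrow> real. \<forall>x. f x \<in> {0, 1}}"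
    then obtain f :: "nat \<Rightarrow> real" where f: "\<forall>x. f x \<in> {0, 1}" and y: "y = (1 / real m) * (\<Sum>t<m. \<sigma> t * f (X ! t))"
      by blast
    have "(\<Sum>x\<in>set X. f x * ?S x) \<le> (\<Sum>x\<in>set X. max 0 (?S x))"
    proof (rule sum_mono)
      fix x show "f x * ?S x \<le> max 0 (?S x)" using f[rule_format, of x] by auto
    qed
    then show "y \<le> (1 / real m) * (\<Sum>x\<in>set X. max 0 (?S x))"
      unfolding y key by (intro mult_left_mono) auto
  qed
qed

theorem lemma4:
  fixes X :: "nat list" and m :: nat
  assumes "length X = m"
  shows "emp_rademacher X =
    (1 / real m) *
      (\<Sum>x\<in>{x. m * emp_measure X x > 0}.
         (let n = nat (round (real m * emp_measure X x)) in
           (1 / 2 ^ n) * real (nat \<lceil>real n / 2\<rceil>) * real (n choose nat \<lceil>real n / 2\<rceil>)))"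
proof (cases "m = 0")
  case True
  then have X: "X = []" using assms by simp
  have e: "{(1 / real 0) * (\<Sum>t<0. \<sigma> t * f (X ! t)) | f :: nat \<Rightarrow> real. \<forall>x. f x \<in> {0, 1}} = {0}"
    for \<sigma> :: "nat \<Rightarrow> real"
    by (auto intro!: exI[of _ "\<lambda>_. 0"])
  show ?thesis using e unfolding emp_rademacher_def emp_measure_def X True by (simp add: Let_def)
next
  case False
  then have m0: "m > 0" by simp
  define T where "T x = {..<m} \<inter> {t. X ! t = x}" for x
  define N where "N x = card (T x)" for x
  define Sig where "Sig = ({..<m} \<rightarrow>\<^sub>E ({-1, 1} :: real set))"
  have finT: "finite (T x)" for x by (simp add: T_def)
  have Nle: "N x \<le> m" for x unfolding N_def T_def
    by (metis card_lessThan card_mono finite_lessThan inf_le1)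
  have em: "real m * emp_measure X x = real (N x)" for x
  proof -
    have "(\<Sum>t<length X. if X ! t = x then 1 else (0::real)) = (\<Sum>t\<in>T x. 1)"
      unfolding T_def assms by (simp add: sum.If_cases Int_def)
    then show ?thesis using m0 assms by (simp add: emp_measure_def N_def)
  qed
  have setX: "{x. real m * emp_measure X x > 0} = set X"
  proof -
    have "N x > 0 \<longleftrightarrow> x \<in> set X" for x
      using finT[of x] assms by (auto simp: N_def T_def card_gt_0_iff in_set_conv_nth)
    then show ?thesis unfolding em by auto
  qed
  have setX': "{x. 0 < N x} = set X"
    using finT assms by (auto simp: N_def T_def card_gt_0_iff in_set_conv_nth)
  have cardSig: "card Sig = 2 ^ m" unfolding Sig_def by (simp add: card_PiE numeral_2_eq_2)
  have finSig: "finite Sig" unfolding Sig_def by (simp add: finite_PiE)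
  have per_x: "(1 / 2 ^ m) * (\<Sum>\<sigma>\<in>Sig. max 0 (\<Sum>t\<in>T x. \<sigma> t)) =
      (1 / 2 ^ N x) * real (nat \<lceil>real (N x) / 2\<rceil>) * real (N x choose nat \<lceil>real (N x) / 2\<rceil>)"
    if x: "x \<in> set X" for x
  proof -
    have Npos: "N x > 0" using x finT[of x] assms by (auto simp: N_def T_def card_gt_0_iff in_set_conv_nth)
    have cd: "card ({..<m} - {t. X ! t = x}) = m - N x"
      by (subst card_Diff_subset_Int) (auto simp: N_def T_def)
    have "(\<Sum>\<sigma>\<in>Sig. max 0 (\<Sum>t\<in>T x. \<sigma> t)) =
        2 ^ (m - N x) * (\<Sum>k\<le>N x. real (N x choose k) * max 0 (2 * real k - real (N x)))"
      unfolding Sig_def T_def N_def using L1[of "{..<m}" "max 0" "{t. X ! t = x}"] cd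
      by (simp add: N_def T_def)
    also have "\<dots> = 2 ^ (m - N x) * (real (nat \<lceil>real (N x) / 2\<rceil>) * real (N x choose nat \<lceil>real (N x) / 2\<rceil>))"
      using L2[OF Npos] by simp
    finally show ?thesis using Nle[of x] by (simp add: power_diff)
  qed
  have "emp_rademacher X = (1 / 2 ^ m) * (\<Sum>\<sigma>\<in>Sig. (1 / real m) * (\<Sum>x\<in>set X. max 0 (\<Sum>t\<in>T x. \<sigma> t)))"
    unfolding emp_rademacher_def Let_def assms Sig_def[symmetric] cardSig
    using sup_step[OF assms] by (simp add: T_def)
  also have "\<dots> = (1 / real m) * (\<Sum>x\<in>set X. (1 / 2 ^ m) * (\<Sum>\<sigma>\<in>Sig. max 0 (\<Sum>t\<in>T x. \<sigma> t)))"
    by (simp add: sum_distrib_left sum.swap[of _ Sig] algebra_simps)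
  also have "\<dots> = (1 / real m) * (\<Sum>x\<in>set X.
      (1 / 2 ^ N x) * real (nat \<lceil>real (N x) / 2\<rceil>) * real (N x choose nat \<lceil>real (N x) / 2\<rceil>))"
    by (intro arg_cong[where f = "\<lambda>s. (1 / real m) * s"] sum.cong refl) (erule per_x)
  also have "\<dots> = (1 / real m) *
      (\<Sum>x\<in>{x. m * emp_measure X x > 0}.
         (let n = nat (round (real m * emp_measure X x)) in
           (1 / 2 ^ n) * real (nat \<lceil>real n / 2\<rceil>) * real (n choose nat \<lceil>real n / 2\<rceil>)))"
    unfolding em using setX' by (simp add: Let_def)
  finally show ?thesis .
qed
end
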